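(* Let $(X,d)$ be a complete metric space and let $T:X\to X$ be a mapping for which there exists $\alpha\in[0,1)$ such that $$d(Tx,T^2x)+d(T^2x,Ty)+d(Ty,Tx)\le \alpha\,[\,d(x,Tx)+d(Tx,y)+d(y,x)\,]$$ for all $x,y\in X$ with $x\neq y$ and $y\neq Tx$ (i.e. $T$ is a generalized orbital triangular contraction). Suppose that $T$ has no periodic points of prime period $2$. Then $T$ has a unique fixed point.
   Context: A point $x\in X$ is a periodic point of period $n$ of $T$ if $T^n x=x$; the least positive integer $n$ with $T^nx=x$ is its prime period. Thus "no periodic points of prime period $2$" means there is no $x\in X$ with $T^2x=x$ and $Tx\neq x$. The condition "$x\neq y\neq Tx$" in the paper means $x\neq y$ and $y\neq Tx$. *)

theory Defs
  imports "HOL-Analysis.Analysis"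
begin

end

theory Submission
  imports Defs
begin

lemma geo_cauchy:
  fixes f :: "nat \<Rightarrow> 'a::metric_space" and \<alpha> c :: real
  assumes a0: "0 \<le> \<alpha>" and a1: "\<alpha> < 1" and c0: "0 \<le> c"
    and d: "\<And>n. dist (f n) (f (Suc n)) \<le> \<alpha>^n * c"
  shows "Cauchy f"
proof -
  have step: "dist (f m) (f (m+k)) \<le> (\<Sum>i<k. \<alpha>^(m+i)) * c" for m k
  proof (induction k)
    case 0 then show ?case by simp
  next
    case (Suc k)
    have "dist (f m) (f (m + Suc k)) \<le> dist (f m) (f (m+k)) + dist (f (m+k)) (f (Suc (m+k)))"
      using dist_triangle by simp
    also have "\<dots> \<le> (\<Sum>i<k. \<alpha>^(m+i)) * c + \<alpha>^(m+k) * c" using Suc d add_mono by blast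
    also have "\<dots> = (\<Sum>i<Suc k. \<alpha>^(m+i)) * c" by (simp add: algebra_simps)
    finally show ?case .
  qed
  have sb: "(\<Sum>i<k. \<alpha>^(m+i)) \<le> \<alpha>^m / (1-\<alpha>)" for m k
  proof -
    have "(\<Sum>i<k. \<alpha>^(m+i)) = \<alpha>^m * (\<Sum>i<k. \<alpha>^i)" by (simp add: power_add sum_distrib_left)
    also have "(\<Sum>i<k. \<alpha>^i) = (1 - \<alpha>^k)/(1-\<alpha>)" using a1 by (simp add: sum_gp_strict)
    also have "\<alpha>^m * ((1 - \<alpha>^k)/(1-\<alpha>)) \<le> \<alpha>^m * (1/(1-\<alpha>))"
      using a0 a1 by (intro mult_left_mono divide_right_mono) auto
    finally show ?thesis by simp
  qed
  have bound: "dist (f m) (f (m+k)) \<le> \<alpha>^m * (c/(1-\<alpha>))" for m k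
  proof -
    have "(\<Sum>i<k. \<alpha>^(m+i)) * c \<le> \<alpha>^m / (1-\<alpha>) * c" using sb c0 mult_right_mono by blast
    then show ?thesis using step[of m k] by simp
  qed
  have lim: "(\<lambda>n. \<alpha>^n * (c/(1-\<alpha>))) \<longlonglongrightarrow> 0"
    using a0 a1 by (intro tendsto_mult_left_zero LIMSEQ_power_zero) auto
  show ?thesis
  proof (rule metric_CauchyI)
    fix e :: real assume e: "0 < e"
    from lim e obtain M where M: "\<And>n. n \<ge> M \<Longrightarrow> \<bar>\<alpha>^n * (c/(1-\<alpha>))\<bar> < e"
      unfolding LIMSEQ_def dist_real_def by fastforce
    have mono: "\<alpha>^m * (c/(1-\<alpha>)) < e" if "m \<ge> M" for m
      using M[OF that] abs_ge_self le_less_trans by blast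
    show "\<exists>M. \<forall>m\<ge>M. \<forall>n\<ge>M. dist (f m) (f n) < e"
    proof (intro exI allI impI)
      fix m n assume mM: "m \<ge> M" and nM: "n \<ge> M"
      show "dist (f m) (f n) < e"
      proof (cases "m \<le> n")
        case True
        then obtain k where "n = m + k" using le_Suc_ex by blast
        then show ?thesis using bound[of m k] mono[OF mM] by simp
      next
        case False
        then obtain k where "m = n + k" by (metis le_Suc_ex nat_le_linear)
        then show ?thesis using bound[of n k] mono[OF nM] by (simp add: dist_commute)
      qed
    qed
  qed
qed


theorem theorem3p1:
  fixes T :: "'a::complete_space \<Rightarrow> 'a" and \<alpha> :: real
  assumes "0 \<le> \<alpha>" and "\<alpha> < 1"
    and "\<And>x y. x \<noteq> y \<Longrightarrow> y \<noteq> T x \<Longrightarrow>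
           dist (T x) (T (T x)) + dist (T (T x)) (T y) + dist (T y) (T x)
             \<le> \<alpha> * (dist x (T x) + dist (T x) y + dist y x)"
    and "\<not> (\<exists>x. (T ^^ 2) x = x \<and> T x \<noteq> x)"
  shows "\<exists>!x. T x = x"
proof -
  note a0 = assms(1) and a1 = assms(2) and H = assms(3)
  have np2: "T (T z) \<noteq> z" if "T z \<noteq> z" for z
    using assms(4) that by (auto simp: numeral_2_eq_2)
  have uniq: "u = v" if "T u = u" "T v = v" for u v
  proof (rule ccontr)
    assume ne: "u \<noteq> v"
    have "v \<noteq> T u" using ne that by simp
    from H[OF ne this] that have "2 * dist u v \<le> \<alpha> * (2 * dist u v)"
      by (simp add: dist_commute)
    moreover have "dist u v > 0" using ne by simp
    moreover have "\<alpha> * (2 * dist u v) < 1 * (2 * dist u v)"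
      using calculation(2) a1 by (intro mult_strict_right_mono) auto
    ultimately show False by linarith
  qed
  have ex: "\<exists>x. T x = x"
  proof (rule ccontr)
    assume nofix: "\<not> (\<exists>x. T x = x)"
    define f where "f n = (T ^^ n) undefined" for n
    have fS: "f (Suc n) = T (f n)" for n by (simp add: f_def)
    define p where "p z = dist z (T z) + dist (T z) (T (T z)) + dist (T (T z)) z" for z
    have pstep: "p (T z) \<le> \<alpha> * p z" for z
    proof -
      have n1: "T z \<noteq> z" using nofix by blast
      have n2: "z \<noteq> T (T z)" using np2[OF n1] by metis
      from H[OF n1 n2] show ?thesis unfolding p_def by (simp add: dist_commute algebra_simps)
    qed
    have ppos: "p z > 0" for z
    proof -
      have "T z \<noteq> z" using nofix by blast
      then have "dist z (T z) > 0" by simp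
      moreover have "dist (T z) (T (T z)) \<ge> 0" "dist (T (T z)) z \<ge> 0" by simp_all
      ultimately show ?thesis unfolding p_def by linarith
    qed
    have pk: "p (f (m+k)) \<le> \<alpha>^k * p (f m)" for m k
    proof (induction k)
      case 0 then show ?case by simp
    next
      case (Suc k)
      have "p (f (m + Suc k)) \<le> \<alpha> * p (f (m+k))" using pstep fS by simp
      also have "\<dots> \<le> \<alpha> * (\<alpha>^k * p (f m))" using Suc a0 mult_left_mono by blast
      finally show ?case by simp
    qed
    have dbound: "dist (f n) (f (Suc n)) \<le> \<alpha>^n * p (f 0)" for n
    proof -
      have "dist (f n) (f (Suc n)) \<le> p (f n)" unfolding p_def fS by simp
      also have "\<dots> \<le> \<alpha>^n * p (f 0)" using pk[of 0 n] by simp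
      finally show ?thesis .
    qed
    have "Cauchy f" using geo_cauchy[OF a0 a1 less_imp_le[OF ppos] dbound] .
    then obtain l where lim: "f \<longlonglongrightarrow> l" using Cauchy_convergent_iff convergent_def by blast
    have injf: "f m \<noteq> f (m + k)" if "k > 0" for m k
    proof
      assume eq: "f m = f (m+k)"
      have "\<alpha>^k \<le> \<alpha>^1" using power_decreasing[of 1 k \<alpha>] that a0 a1 by simp
      then have "\<alpha>^k < 1" using a1 by simp
      then have "\<alpha>^k * p (f m) < p (f m)" using ppos[of "f m"] by simp
      with pk[of m k] eq show False by simp
    qed
    obtain N where N: "\<And>n. n \<ge> N \<Longrightarrow> f n \<noteq> l"
    proof (cases "\<exists>N. f N = l")
      case True
      then obtain N where fN: "f N = l" by blast
      have "f n \<noteq> l" if "n \<ge> Suc N" for n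
      proof -
        have e: "n = N + (n - N)" "n - N > 0" using \<open>n \<ge> Suc N\<close> by auto
        show ?thesis using injf[OF e(2), of N] fN e(1) by simp
      qed
      then show ?thesis using that by blast
    next
      case False then show ?thesis using that by blast
    qed
    have Tl: "T l = l"
    proof (rule ccontr)
      assume ne: "T l \<noteq> l"
      define g where "g n = \<alpha> * (dist (f n) (f (Suc n)) + dist (f (Suc n)) l + dist l (f n))" for n
      have lim1: "(\<lambda>n. f (Suc n)) \<longlonglongrightarrow> l" using lim by (rule LIMSEQ_Suc)
      have lim2: "(\<lambda>n. f (Suc (Suc n))) \<longlonglongrightarrow> l" using lim1 by (rule LIMSEQ_Suc)
      have g0: "g \<longlonglongrightarrow> 0"
      proof -
        have "(\<lambda>n. dist (f n) (f (Suc n)) + dist (f (Suc n)) l + dist l (f n)) \<longlonglongrightarrow> dist l l + dist l l + dist l l"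
          by (intro tendsto_add tendsto_dist lim lim1 tendsto_const)
        then have "(\<lambda>n. \<alpha> * (dist (f n) (f (Suc n)) + dist (f (Suc n)) l + dist l (f n))) \<longlonglongrightarrow> \<alpha> * 0"
          using tendsto_mult_left by fastforce
        then show ?thesis unfolding g_def by simp
      qed
      have ev: "\<forall>\<^sub>F n in sequentially. norm (dist (f (Suc (Suc n))) (T l)) \<le> g n"
        unfolding eventually_sequentially
      proof (intro exI allI impI)
        fix n assume "n \<ge> N"
        then have x1: "f n \<noteq> l" and x2: "l \<noteq> T (f n)"
          using N[of n] N[of "Suc n"] fS by auto
        have hh: "dist (T (f n)) (T (T (f n))) + dist (T (T (f n))) (T l) + dist (T l) (T (f n))
             \<le> \<alpha> * (dist (f n) (T (f n)) + dist (T (f n)) l + dist l (f n))" using H[OF x1 x2] .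
        have "dist (T (f n)) (T (T (f n))) \<ge> 0" "dist (T l) (T (f n)) \<ge> 0" by simp_all
        with hh have "dist (T (T (f n))) (T l) \<le> g n" unfolding g_def fS by linarith
        then show "norm (dist (f (Suc (Suc n))) (T l)) \<le> g n" by (simp add: fS)
      qed
      have "(\<lambda>n. dist (f (Suc (Suc n))) (T l)) \<longlonglongrightarrow> 0"
        using Lim_null_comparison[OF ev g0] .
      then have "(\<lambda>n. f (Suc (Suc n))) \<longlonglongrightarrow> T l" using tendsto_dist_iff by blast
      with lim2 have "T l = l" using LIMSEQ_unique by blast
      with ne show False by simp
    qed
    with nofix show False by blast
  qed
  from ex uniq show ?thesis by blast
qed

end
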